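(* Let $\mathrm{Sample}_{m/n}$ denote Poisson subsampling of a dataset of size $n$ at rate $m/n$, and let $M$ denote the map taking the subsample indexed by $I$ to the pair $(\bar x,\bar y)$ with $\bar x=\frac1m\sum_{i\in I}x_i'+\mathcal N(0,(C_x\sigma_x/m)^2I)$, $\bar y=\frac1m\sum_{i\in I}y_i'+\mathcal N(0,(C_y\sigma_y/m)^2I)$, where $x_i'=f_1(x_i)/\max(1,\|f_1(x_i)\|_2/C_x)$ and $y_i'=y_i/\max(1,\|y_i\|_2/C_y)$ (i.e. one step of DPFMix). Then for all neighboring datasets $S,S'$ (where $S$ is obtained from $S'$ by removing one record), $$T\big(M\circ\mathrm{Sample}_{m/n}(S),\,M\circ\mathrm{Sample}_{m/n}(S')\big)\ \ge\ \tfrac{m}{n}G_{\sqrt{1/\sigma_x^2+1/\sigma_y^2}}+\big(1-\tfrac{m}{n}\big)\mathrm{Id}.$$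
   Context: Poisson subsampling at rate $p$: each index $i\in\{1,\dots,n\}$ is included independently with probability $p$. $f_1$ is a fixed feature map; $C_x,C_y,\sigma_x,\sigma_y>0$; $1\le m\le n$. For distributions $P,Q$, $T(P,Q)(\alpha)=\inf_\phi\{1-\mathbb{E}_Q[\phi]:\mathbb{E}_P[\phi]\le\alpha\}$ over rejection rules $\phi$ (the trade-off function). $G_\mu(\alpha)=\Phi(\Phi^{-1}(1-\alpha)-\mu)$ with $\Phi$ the standard normal CDF; $\mathrm{Id}(\alpha)=1-\alpha$. *)

theory Defs
  imports "HOL-Probability.Probability"
begin

definition Phi :: "real \<Rightarrow> real" where
  "Phi x = measure (density lborel std_normal_density) {..x}"

definition Phi_inv :: "real \<Rightarrow> real" where
  "Phi_inv q = (THE z. Phi z = q)"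

(* Gaussian trade-off function G_mu(alpha) = Phi(Phi^{-1}(1-alpha) - mu),
   extended to the endpoints by its limits: G_mu(0) = 1, G_mu(1) = 0. *)
definition G_tradeoff :: "real \<Rightarrow> real \<Rightarrow> real" where
  "G_tradeoff mu \<alpha> =
     (if \<alpha> \<le> 0 then 1 else if 1 \<le> \<alpha> then 0 else Phi (Phi_inv (1 - \<alpha>) - mu))"

definition tradeoff :: "'a measure \<Rightarrow> 'a measure \<Rightarrow> real \<Rightarrow> real" where
  "tradeoff P Q \<alpha> = Inf {1 - (\<integral>x. \<phi> x \<partial>Q) | \<phi>.
      \<phi> \<in> borel_measurable P \<and> (\<forall>x. 0 \<le> \<phi> x \<and> \<phi> x \<le> 1) \<and> (\<integral>x. \<phi> x \<partial>P) \<le> \<alpha>}"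

(* Isotropic Gaussian N(0, s^2 I) on a Euclidean space *)
definition gauss_vec :: "real \<Rightarrow> 'b::euclidean_space measure" where
  "gauss_vec s = distr (PiM Basis (\<lambda>_. density lborel (normal_density 0 s))) borel
                       (\<lambda>z. \<Sum>b\<in>Basis. z b *\<^sub>R b)"

definition poisson_sample :: "real \<Rightarrow> nat \<Rightarrow> nat set pmf" where
  "poisson_sample p N = map_pmf (\<lambda>b. {i. i < N \<and> b i}) (Pi_pmf {..<N} False (\<lambda>_. bernoulli_pmf p))"

definition clip :: "real \<Rightarrow> 'b::real_normed_vector \<Rightarrow> 'b" where
  "clip C v = v /\<^sub>R max 1 (norm v / C)"

definition dpfmix_step ::
  "('a \<Rightarrow> 'b::euclidean_space) \<Rightarrow> nat \<Rightarrow> real \<Rightarrow> real \<Rightarrow> real \<Rightarrow> real \<Rightarrow>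
   ('a \<times> 'c::euclidean_space) list \<Rightarrow> nat set \<Rightarrow> ('b \<times> 'c) measure" where
  "dpfmix_step f1 m Cx Cy \<sigma>x \<sigma>y D I =
     distr (gauss_vec (Cx * \<sigma>x / m) \<Otimes>\<^sub>M gauss_vec (Cy * \<sigma>y / m)) borel
       (\<lambda>(u, v). ((1 / real m) *\<^sub>R (\<Sum>i\<in>I. clip Cx (f1 (fst (D ! i)))) + u,
                  (1 / real m) *\<^sub>R (\<Sum>i\<in>I. clip Cy (snd (D ! i))) + v))"

definition dpfmix_subsampled ::
  "('a \<Rightarrow> 'b::euclidean_space) \<Rightarrow> nat \<Rightarrow> nat \<Rightarrow> real \<Rightarrow> real \<Rightarrow> real \<Rightarrow> real \<Rightarrow>
   ('a \<times> 'c::euclidean_space) list \<Rightarrow> ('b \<times> 'c) measure" where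
  "dpfmix_subsampled f1 m n Cx Cy \<sigma>x \<sigma>y D =
     measure_pmf (poisson_sample (real m / real n) (length D)) \<bind> dpfmix_step f1 m Cx Cy \<sigma>x \<sigma>y D"

end

theory Submission
  imports Defs
begin


lemma ps_normal: "0 < s \<Longrightarrow> prob_space (density lborel (normal_density m s))"
  by (rule prob_space_normal_density)

lemma ps_std: "prob_space (density lborel std_normal_density)"
  by (rule ps_normal) simp

lemma real_distr_std: "real_distribution (density lborel std_normal_density)"
  unfolding real_distribution_def real_distribution_axioms_def
  using prob_space_normal_density by auto

lemma fbm_std: "finite_borel_measure (density lborel std_normal_density)"
  using real_distribution.finite_borel_measure_M[OF real_distr_std] .

lemma Phi_cdf: "Phi = cdf (density lborel std_normal_density)"
  by (simp add: Phi_def[abs_def] cdf_def)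

lemma Phi_mono: "x \<le> y \<Longrightarrow> Phi x \<le> Phi y"
  unfolding Phi_cdf using finite_borel_measure.cdf_nondecreasing[OF fbm_std] by blast

lemma Phi_cont: "isCont Phi x"
proof -
  have "emeasure (density lborel std_normal_density) {x} = 0"
    by (subst emeasure_density) (auto intro!: nn_integral_null_set)
  then show ?thesis unfolding Phi_cdf
    using finite_borel_measure.isCont_cdf[OF fbm_std] by (simp add: measure_def)
qed

lemma Phi_top: "(Phi \<longlongrightarrow> 1) at_top"
  unfolding Phi_cdf using real_distribution.cdf_lim_at_top_prob[OF real_distr_std] .

lemma Phi_bot: "(Phi \<longlongrightarrow> 0) at_bot"
  unfolding Phi_cdf using finite_borel_measure.cdf_lim_at_bot real_distribution.finite_borel_measure_M[OF real_distr_std] by blast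

lemma Phi_strict: assumes "x < y" shows "Phi x < Phi y"
proof -
  let ?M = "density lborel std_normal_density"
  have d: "Phi y - Phi x = measure ?M {x<..y}"
    unfolding Phi_cdf using finite_borel_measure.cdf_diff_eq[OF real_distribution.finite_borel_measure_M[OF real_distr_std] assms] by simp
  have "emeasure ?M {x<..y} \<noteq> 0"
  proof
    assume "emeasure ?M {x<..y} = 0"
    then have "(\<integral>\<^sup>+ t. ennreal (std_normal_density t) * indicator {x<..y} t \<partial>lborel) = 0"
      by (subst (asm) emeasure_density) auto
    then have "AE t in lborel. ennreal (std_normal_density t) * indicator {x<..y} t = 0"
      by (subst (asm) nn_integral_0_iff_AE) auto
    moreover have pos: "\<And>t. std_normal_density t > 0" using normal_density_pos[of 1 0] by simp
    ultimately have "AE t in lborel. t \<notin> {x<..y}"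
    proof (elim eventually_mono)
      fix t assume h: "ennreal (std_normal_density t) * indicator {x<..y} t = 0"
      show "t \<notin> {x<..y}"
      proof
        assume "t \<in> {x<..y}"
        with h have "ennreal (std_normal_density t) = 0" by simp
        with pos[of t] show False by simp
      qed
    qed
    then have "{x<..y} \<in> null_sets lborel"
      by (subst AE_iff_null_sets) auto
    then have "emeasure lborel {x<..y} = 0" by auto
    with assms show False by simp
  qed
  moreover have "emeasure ?M {x<..y} = ennreal (measure ?M {x<..y})"
    by (rule finite_measure.emeasure_eq_measure[OF prob_space.finite_measure[OF ps_std]])
  ultimately have "measure ?M {x<..y} \<noteq> 0" by auto
  then have "measure ?M {x<..y} > 0" using measure_nonneg[of ?M "{x<..y}"] by linarith
  with d show ?thesis by simp
qed

lemma Phi_surj: assumes "0 < q" "q < 1" shows "\<exists>z. Phi z = q"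
proof -
  from order_tendstoD(1)[OF Phi_top] assms have "eventually (\<lambda>x. Phi x > q) at_top"
    by auto
  then obtain b where b: "Phi b > q" by (auto simp: eventually_at_top_linorder)
  from order_tendstoD(2)[OF Phi_bot] assms have "eventually (\<lambda>x. Phi x < q) at_bot"
    by auto
  then obtain a0 where a0: "\<And>x. x \<le> a0 \<Longrightarrow> Phi x < q" by (auto simp: eventually_at_bot_linorder)
  define a where "a = min a0 b"
  have "Phi a < q" "a \<le> b" using a0 by (auto simp: a_def)
  then show ?thesis using IVT'[of Phi a q b] b Phi_cont
    by (auto intro!: continuous_at_imp_continuous_on)
qed

lemma Phi_inv: assumes "0 < q" "q < 1" shows "Phi (Phi_inv q) = q"
proof -
  obtain z where z: "Phi z = q" using Phi_surj[OF assms] by blast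
  have "\<exists>!z. Phi z = q"
    using z Phi_strict by (metis linorder_neqE_linordered_idom order_less_irrefl)
  then show ?thesis unfolding Phi_inv_def by (rule theI')
qed

lemma Phi_bounds: "0 \<le> Phi x" "Phi x \<le> 1"
  unfolding Phi_cdf using finite_borel_measure.cdf_nonneg[OF fbm_std] real_distribution.cdf_bounded_prob[OF real_distr_std] by blast+





lemma normal_cdf:
  assumes M: "prob_space M" and X: "distributed M lborel X (normal_density 0 \<sigma>)" and s: "0 < \<sigma>"
  shows "measure M {x\<in>space M. X x \<le> a} = Phi (a / \<sigma>)"
proof -
  interpret prob_space M by fact
  have D: "distributed M lborel (\<lambda>x. (X x - 0) / \<sigma>) std_normal_density"
    using normal_standard_normal_convert[OF s] X by simp
  then have eq: "distr M lborel (\<lambda>x. X x / \<sigma>) = density lborel std_normal_density"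
    and meas: "(\<lambda>x. X x / \<sigma>) \<in> measurable M lborel"
    by (auto simp: distributed_def)
  have "{x\<in>space M. X x \<le> a} = (\<lambda>x. X x / \<sigma>) -` {..a/\<sigma>} \<inter> space M"
    using s by (auto simp: divide_le_cancel)
  then have "measure M {x\<in>space M. X x \<le> a} = measure (distr M lborel (\<lambda>x. X x / \<sigma>)) {..a/\<sigma>}"
    using meas by (simp add: measure_distr)
  also have "\<dots> = Phi (a / \<sigma>)" unfolding eq Phi_def ..
  finally show ?thesis .
qed

lemma normal_tail:
  assumes M: "prob_space M" and X: "distributed M lborel X (normal_density 0 \<sigma>)" and s: "0 < \<sigma>"
  shows "measure M {x\<in>space M. X x > a} = 1 - Phi (a / \<sigma>)"
proof -
  interpret prob_space M by fact
  have meas[measurable]: "X \<in> borel_measurable M" using X by (auto simp: distributed_def)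
  have "{x\<in>space M. X x > a} = space M - {x\<in>space M. X x \<le> a}" by auto
  then have "measure M {x\<in>space M. X x > a} = 1 - measure M {x\<in>space M. X x \<le> a}"
    by (simp add: prob_compl)
  then show ?thesis using normal_cdf[OF M X s] by simp
qed



definition gdens :: "real \<Rightarrow> 'b::euclidean_space \<Rightarrow> real" where
  "gdens s u = (\<Prod>b\<in>Basis. normal_density 0 s (u \<bullet> b))"

lemma gdens_nonneg: "0 \<le> gdens s u"
  by (simp add: gdens_def prod_nonneg)

lemma gdens_measurable[measurable]: "gdens s \<in> borel_measurable borel"
  unfolding gdens_def[abs_def] by measurable

lemma PiM_normal_density:
  fixes I :: "'i set" assumes I: "finite I" and s: "0 < s"
  shows "PiM I (\<lambda>_. density lborel (normal_density 0 s)) =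
         density (PiM I (\<lambda>_. lborel)) (\<lambda>z. ennreal (\<Prod>i\<in>I. normal_density 0 s (z i)))"
proof -
  let ?D = "density lborel (\<lambda>x. ennreal (normal_density 0 s x))"
  interpret D: prob_space ?D by (rule ps_normal) fact
  interpret PD: product_sigma_finite "\<lambda>_::'i. ?D" by standard
  interpret PL: product_sigma_finite "\<lambda>_::'i. lborel :: real measure" by standard
  show ?thesis
  proof (rule PD.PiM_eqI[symmetric])
    show "finite I" by fact
    show "sets (density (PiM I (\<lambda>_. lborel)) (\<lambda>z. ennreal (\<Prod>i\<in>I. normal_density 0 s (z i)))) = sets (PiM I (\<lambda>_. ?D))"
      unfolding sets_density by (rule sets_PiM_cong) auto
  next
    fix A assume A: "\<And>i. i \<in> I \<Longrightarrow> A i \<in> sets ?D"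
    then have A': "\<And>i. i \<in> I \<Longrightarrow> A i \<in> sets borel" by simp
    have "emeasure (density (PiM I (\<lambda>_. lborel)) (\<lambda>z. ennreal (\<Prod>i\<in>I. normal_density 0 s (z i)))) (Pi\<^sub>E I A)
       = (\<integral>\<^sup>+z. ennreal (\<Prod>i\<in>I. normal_density 0 s (z i)) * indicator (Pi\<^sub>E I A) z \<partial>PiM I (\<lambda>_. lborel))"
      using A' by (intro emeasure_density) (auto intro!: sets_PiM_I_finite I)
    also have "\<dots> = (\<integral>\<^sup>+z. (\<Prod>i\<in>I. ennreal (normal_density 0 s (z i)) * indicator (A i) (z i)) \<partial>PiM I (\<lambda>_. lborel))"
      proof (intro nn_integral_cong)
      fix z assume z: "z \<in> space (PiM I (\<lambda>_. lborel :: real measure))"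
      have "indicator (Pi\<^sub>E I A) z = (\<Prod>i\<in>I. indicator (A i) (z i) :: ennreal)"
        using z I by (auto simp: indicator_def space_PiM PiE_iff)
      then show "ennreal (\<Prod>i\<in>I. normal_density 0 s (z i)) * indicator (Pi\<^sub>E I A) z =
         (\<Prod>i\<in>I. ennreal (normal_density 0 s (z i)) * indicator (A i) (z i))"
        by (simp add: prod.distrib prod_ennreal)
    qed
    also have "\<dots> = (\<Prod>i\<in>I. \<integral>\<^sup>+x. ennreal (normal_density 0 s x) * indicator (A i) x \<partial>lborel)"
      using A' I by (intro PL.product_nn_integral_prod) auto
    also have "\<dots> = (\<Prod>i\<in>I. emeasure ?D (A i))"
      using A' by (intro prod.cong refl) (simp add: emeasure_density)
    finally show "emeasure (density (PiM I (\<lambda>_. lborel)) (\<lambda>z. ennreal (\<Prod>i\<in>I. normal_density 0 s (z i)))) (Pi\<^sub>E I A)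
       = (\<Prod>i\<in>I. emeasure ?D (A i))" .
  qed
qed


lemma inner_sum_Basis_comp:
  fixes z :: "'b::euclidean_space \<Rightarrow> real"
  assumes "b \<in> Basis" shows "(\<Sum>b'\<in>Basis. z b' *\<^sub>R b') \<bullet> b = z b"
  using assms by (simp add: inner_sum_left inner_Basis if_distrib cong: if_cong)

lemma gauss_vec_density:
  assumes s: "0 < s"
  shows "gauss_vec s = (density lborel (\<lambda>u. ennreal (gdens s u)) :: 'b::euclidean_space measure)"
proof -
  let ?P0 = "PiM (Basis::'b set) (\<lambda>_. lborel :: real measure)"
  let ?E = "\<lambda>f. \<Sum>b\<in>(Basis::'b set). f b *\<^sub>R b"
  have Em: "?E \<in> measurable ?P0 borel" by measurable
  have "density lborel (\<lambda>u. ennreal (gdens s u)) = density (distr ?P0 borel ?E) (\<lambda>u. ennreal (gdens s u))"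
    by (subst lborel_eq) rule
  also have "\<dots> = distr (density ?P0 (\<lambda>z. ennreal (gdens s (?E z)))) borel ?E"
    using Em by (intro density_distr) auto
  also have "density ?P0 (\<lambda>z. ennreal (gdens s (?E z))) = density ?P0 (\<lambda>z. ennreal (\<Prod>b\<in>Basis. normal_density 0 s (z b)))"
    by (intro density_cong) (auto simp: gdens_def inner_sum_Basis_comp)
  also have "\<dots> = PiM Basis (\<lambda>_. density lborel (normal_density 0 s))"
    by (rule PiM_normal_density[symmetric]) (auto simp: s)
  finally show ?thesis unfolding gauss_vec_def by simp
qed

lemma prob_space_gauss_vec: "0 < s \<Longrightarrow> prob_space (gauss_vec s)"
  unfolding gauss_vec_def
  by (intro prob_space.prob_space_distr prob_space_PiM ps_normal) auto

lemma sets_gauss_vec[simp, measurable_cong]: "sets (gauss_vec s) = sets borel"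
  by (simp add: gauss_vec_def)




lemma sf_gauss_vec: "0 < s \<Longrightarrow> sigma_finite_measure (gauss_vec s)"
  using prob_space_gauss_vec[of s] by (rule prob_space_imp_sigma_finite)

lemma fst_borel[measurable]: "(fst :: ('b::euclidean_space \<times> 'c::euclidean_space) \<Rightarrow> 'b) \<in> borel \<rightarrow>\<^sub>M borel"
  by (rule borel_measurable_continuous_onI) (intro continuous_intros)

lemma snd_borel[measurable]: "(snd :: ('b::euclidean_space \<times> 'c::euclidean_space) \<Rightarrow> 'c) \<in> borel \<rightarrow>\<^sub>M borel"
  by (rule borel_measurable_continuous_onI) (intro continuous_intros)

lemma gauss_pair_density:
  assumes s1: "0 < s1" and s2: "0 < s2"
  shows "(gauss_vec s1 \<Otimes>\<^sub>M gauss_vec s2 :: ('b::euclidean_space \<times> 'c::euclidean_space) measure)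
    = density lborel (\<lambda>x. ennreal (gdens s1 (fst x) * gdens s2 (snd x)))"
proof -
  have sf: "sigma_finite_measure (density lborel (\<lambda>u. ennreal (gdens s2 u)) :: 'c measure)"
    using sf_gauss_vec[OF s2] gauss_vec_density[OF s2] by metis
  have "(gauss_vec s1 \<Otimes>\<^sub>M gauss_vec s2 :: ('b \<times> 'c) measure)
      = density lborel (\<lambda>u. ennreal (gdens s1 u)) \<Otimes>\<^sub>M density lborel (\<lambda>u. ennreal (gdens s2 u))"
    by (simp add: gauss_vec_density s1 s2)
  also have "\<dots> = density (lborel \<Otimes>\<^sub>M lborel) (\<lambda>(x,y). ennreal (gdens s1 x) * ennreal (gdens s2 y))"
    by (rule pair_measure_density) (auto simp: sf lborel.sigma_finite_measure_axioms)
  also have "\<dots> = density lborel (\<lambda>x. ennreal (gdens s1 (fst x) * gdens s2 (snd x)))"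
    unfolding lborel_prod
    by (intro density_cong) (auto simp: ennreal_mult gdens_nonneg)
  finally show ?thesis .
qed

lemma nd_shift:
  assumes s: "0 < s"
  shows "normal_density 0 s (x - a) = normal_density 0 s x * exp (a * x / s\<^sup>2 - a\<^sup>2 / (2 * s\<^sup>2))"
proof -
  have "exp (- (x - a - 0)\<^sup>2 / (2 * s\<^sup>2)) = exp (- (x - 0)\<^sup>2 / (2 * s\<^sup>2)) * exp (a * x / s\<^sup>2 - a\<^sup>2 / (2 * s\<^sup>2))"
    unfolding exp_add[symmetric] using s by (simp add: field_simps power2_eq_square)
  then show ?thesis unfolding normal_density_def by simp
qed

lemma gdens_shift:
  fixes u \<delta> :: "'b::euclidean_space"
  assumes s: "0 < s"
  shows "gdens s (u - \<delta>) = gdens s u * exp ((\<delta> \<bullet> u) / s\<^sup>2 - (norm \<delta>)\<^sup>2 / (2 * s\<^sup>2))"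
proof -
  have "gdens s (u - \<delta>) = (\<Prod>b\<in>Basis. normal_density 0 s (u \<bullet> b) * exp ((\<delta> \<bullet> b) * (u \<bullet> b) / s\<^sup>2 - (\<delta> \<bullet> b)\<^sup>2 / (2 * s\<^sup>2)))"
    unfolding gdens_def by (simp add: inner_diff_left nd_shift[OF s])
  also have "\<dots> = gdens s u * exp (\<Sum>b\<in>Basis. (\<delta> \<bullet> b) * (u \<bullet> b) / s\<^sup>2 - (\<delta> \<bullet> b)\<^sup>2 / (2 * s\<^sup>2))"
    unfolding gdens_def prod.distrib exp_sum[OF finite_Basis] ..
  also have "(\<Sum>b\<in>Basis. (\<delta> \<bullet> b) * (u \<bullet> b) / s\<^sup>2 - (\<delta> \<bullet> b)\<^sup>2 / (2 * s\<^sup>2))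
      = (\<Sum>b\<in>Basis. (\<delta> \<bullet> b) * (u \<bullet> b)) / s\<^sup>2 - (\<Sum>b\<in>Basis. (\<delta> \<bullet> b) * (\<delta> \<bullet> b)) / (2 * s\<^sup>2)"
    by (simp add: sum_subtractf sum_divide_distrib power2_eq_square)
  also have "\<dots> = (\<delta> \<bullet> u) / s\<^sup>2 - (norm \<delta>)\<^sup>2 / (2 * s\<^sup>2)"
    by (simp add: euclidean_inner[symmetric] power2_norm_eq_inner)
  finally show ?thesis .
qed

definition Wf :: "real \<Rightarrow> real \<Rightarrow> 'b::euclidean_space \<Rightarrow> 'c::euclidean_space \<Rightarrow> 'b \<times> 'c \<Rightarrow> real" where
  "Wf s1 s2 d1 d2 x = (d1 \<bullet> fst x) / s1\<^sup>2 + (d2 \<bullet> snd x) / s2\<^sup>2"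

definition Vn :: "real \<Rightarrow> real \<Rightarrow> 'b::euclidean_space \<Rightarrow> 'c::euclidean_space \<Rightarrow> real" where
  "Vn s1 s2 d1 d2 = (norm d1)\<^sup>2 / s1\<^sup>2 + (norm d2)\<^sup>2 / s2\<^sup>2"

lemma Wf_shift: "Wf s1 s2 d1 d2 ((d1, d2) + x) = Wf s1 s2 d1 d2 x + Vn s1 s2 d1 d2"
  by (simp add: Wf_def Vn_def inner_add_right power2_norm_eq_inner add_divide_distrib)

lemma Wf_measurable[measurable]: "Wf s1 s2 d1 d2 \<in> borel_measurable borel"
  unfolding Wf_def[abs_def] by measurable

lemma gauss_shift:
  fixes d1 :: "'b::euclidean_space" and d2 :: "'c::euclidean_space"
  assumes s1: "0 < s1" and s2: "0 < s2"
  shows "distr (gauss_vec s1 \<Otimes>\<^sub>M gauss_vec s2) borel (\<lambda>x. (d1, d2) + x)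
    = density (gauss_vec s1 \<Otimes>\<^sub>M gauss_vec s2) (\<lambda>x. ennreal (exp (Wf s1 s2 d1 d2 x - Vn s1 s2 d1 d2 / 2)))"
proof -
  define n where "n x = gdens s1 (fst x) * gdens s2 (snd x)" for x :: "'b \<times> 'c"
  have nm[measurable]: "n \<in> borel_measurable borel" unfolding n_def[abs_def] by measurable
  have N: "gauss_vec s1 \<Otimes>\<^sub>M gauss_vec s2 = density lborel (\<lambda>x. ennreal (n x))"
    unfolding n_def by (rule gauss_pair_density[OF s1 s2])
  have "density lborel (\<lambda>y. ennreal (n (y - (d1, d2))))
      = density (distr lborel borel ((+) (d1, d2))) (\<lambda>y. ennreal (n (y - (d1, d2))))"
    by (simp add: lborel_distr_plus)
  also have "\<dots> = distr (density lborel (\<lambda>x. ennreal (n ((d1, d2) + x - (d1, d2))))) borel ((+) (d1, d2))"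
    by (rule density_distr) auto
  also have "\<dots> = distr (density lborel (\<lambda>x. ennreal (n x))) borel (\<lambda>x. (d1, d2) + x)"
    by simp
  finally have 1: "distr (density lborel (\<lambda>x. ennreal (n x))) borel (\<lambda>x. (d1, d2) + x) =
      density lborel (\<lambda>y. ennreal (n (y - (d1, d2))))" ..
  have eq: "n (y - (d1, d2)) = n y * exp (Wf s1 s2 d1 d2 y - Vn s1 s2 d1 d2 / 2)" for y
    unfolding n_def Wf_def Vn_def
    by (simp add: gdens_shift[OF s1] gdens_shift[OF s2] exp_add[symmetric] field_simps)
  have eq2: "ennreal (n (y - (d1, d2))) = ennreal (n y) * ennreal (exp (Wf s1 s2 d1 d2 y - Vn s1 s2 d1 d2 / 2))" for y
    unfolding eq by (rule ennreal_mult) (simp_all add: n_def gdens_nonneg)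
  have "density lborel (\<lambda>y. ennreal (n (y - (d1, d2))))
      = density lborel (\<lambda>y. ennreal (n y) * ennreal (exp (Wf s1 s2 d1 d2 y - Vn s1 s2 d1 d2 / 2)))"
    by (simp only: eq2)
  also have "\<dots> = density (density lborel (\<lambda>x. ennreal (n x))) (\<lambda>y. ennreal (exp (Wf s1 s2 d1 d2 y - Vn s1 s2 d1 d2 / 2)))"
    by (rule density_density_eq[symmetric]) auto
  finally show ?thesis using 1 N by simp
qed




lemma gauss_vec_lin:
  fixes w :: "'b::euclidean_space"
  assumes s: "0 < s" and w: "w \<noteq> 0"
  shows "distributed (gauss_vec s) lborel (\<lambda>u. w \<bullet> u) (normal_density 0 (s * norm w))"
proof -
  define D where "D = density lborel (\<lambda>x. ennreal (normal_density 0 s x))"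
  define P where "P = PiM (Basis::'b set) (\<lambda>_. D)"
  have psD: "prob_space D" unfolding D_def by (rule ps_normal) fact
  have sD[simp, measurable_cong]: "sets D = sets borel" by (simp add: D_def)
  interpret P: prob_space P unfolding P_def by (intro prob_space_PiM psD)
  have gv: "gauss_vec s = distr P borel (\<lambda>f. \<Sum>b\<in>Basis. f b *\<^sub>R b)"
    unfolding gauss_vec_def P_def D_def ..
  have ind0: "P.indep_vars (\<lambda>_. D) (\<lambda>b z. z b) Basis"
  proof (subst P.indep_vars_iff_distr_eq_PiM')
    show "(Basis::'b set) \<noteq> {}" by simp
    show "(\<lambda>z. z i) \<in> measurable P D" if "i \<in> Basis" for i :: 'b
      unfolding P_def using that by simp
    have "distr P (PiM Basis (\<lambda>_. D)) (\<lambda>x. \<lambda>i\<in>Basis. x i) = distr P (PiM Basis (\<lambda>_. D)) (\<lambda>x. x)"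
      by (intro distr_cong) (auto simp: P_def space_PiM)
    also have "\<dots> = P" by (simp add: distr_id2 P_def)
    also have "\<dots> = PiM Basis (\<lambda>i. distr P D (\<lambda>z. z i))"
      unfolding P_def by (intro PiM_cong refl distr_PiM_component[symmetric] psD)
    finally show "distr P (PiM Basis (\<lambda>_. D)) (\<lambda>x. \<lambda>i\<in>Basis. x i) = PiM Basis (\<lambda>i. distr P D (\<lambda>z. z i))" .
  qed
  define B' where "B' = {b\<in>(Basis::'b set). w \<bullet> b \<noteq> 0}"
  have B'fin: "finite B'" by (simp add: B'_def)
  have B'ne: "B' \<noteq> {}"
  proof
    assume "B' = {}"
    then have "\<forall>b\<in>Basis. w \<bullet> b = 0" by (auto simp: B'_def)
    then have "w = 0" using euclidean_all_zero_iff by blast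
    with w show False ..
  qed
  have ind: "P.indep_vars (\<lambda>_. borel) (\<lambda>b z. (w \<bullet> b) * z b) B'"
    by (rule P.indep_vars_compose2[where X="\<lambda>b z. z b" and M'="\<lambda>_. D", OF P.indep_vars_subset[OF ind0]])
       (auto simp: B'_def)
  have comp: "distributed P lborel (\<lambda>z. z b) (normal_density 0 s)" if b: "b \<in> Basis" for b
    unfolding distributed_def
  proof (intro conjI)
    have "distr P lborel (\<lambda>z. z b) = distr P D (\<lambda>z. z b)" by (intro distr_cong) auto
    also have "\<dots> = D" unfolding P_def by (intro distr_PiM_component psD b)
    finally show "distr P lborel (\<lambda>z. z b) = density lborel (\<lambda>x. ennreal (normal_density 0 s x))"
      by (simp add: D_def)
    show "(\<lambda>z. z b) \<in> P \<rightarrow>\<^sub>M lborel" unfolding P_def using b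
    proof -
      have "(\<lambda>z. z b) \<in> measurable (PiM Basis (\<lambda>_. D)) D" using b by simp
      then show "(\<lambda>z. z b) \<in> measurable (PiM Basis (\<lambda>_. D)) lborel"
        by (subst measurable_cong_sets[where M'="PiM Basis (\<lambda>_. D)" and N'=D]) auto
    qed
  qed simp
  have distb: "distributed P lborel (\<lambda>z. (w \<bullet> b) * z b) (normal_density 0 (\<bar>w \<bullet> b\<bar> * s))" if b: "b \<in> B'" for b
    using P.normal_density_affine[OF comp[of b] s, of "w \<bullet> b" 0] b by (auto simp: B'_def)
  have S: "distributed P lborel (\<lambda>z. \<Sum>b\<in>B'. (w \<bullet> b) * z b) (normal_density (\<Sum>b\<in>B'. 0) (sqrt (\<Sum>b\<in>B'. (\<bar>w \<bullet> b\<bar> * s)\<^sup>2)))"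
    by (rule P.sum_indep_normal[OF B'fin B'ne ind _ distb]) (use s in \<open>auto simp: B'_def\<close>)
  have "(\<Sum>b\<in>B'. (\<bar>w \<bullet> b\<bar> * s)\<^sup>2) = s\<^sup>2 * (\<Sum>b\<in>Basis. (w \<bullet> b)\<^sup>2)"
  proof -
    have "(\<Sum>b\<in>B'. (\<bar>w \<bullet> b\<bar> * s)\<^sup>2) = (\<Sum>b\<in>Basis. (\<bar>w \<bullet> b\<bar> * s)\<^sup>2)"
      by (intro sum.mono_neutral_left) (auto simp: B'_def)
    also have "\<dots> = s\<^sup>2 * (\<Sum>b\<in>Basis. (w \<bullet> b)\<^sup>2)"
      by (simp add: sum_distrib_left power_mult_distrib mult.commute)
    finally show ?thesis .
  qed
  also have "(\<Sum>b\<in>Basis. (w \<bullet> b)\<^sup>2) = (norm w)\<^sup>2"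
    by (simp add: euclidean_inner[of w w, symmetric] power2_norm_eq_inner[symmetric] power2_eq_square)
  finally have sq: "sqrt (\<Sum>b\<in>B'. (\<bar>w \<bullet> b\<bar> * s)\<^sup>2) = s * norm w"
    using s by (simp add: real_sqrt_mult)
  have S': "distributed P lborel (\<lambda>z. \<Sum>b\<in>B'. (w \<bullet> b) * z b) (normal_density 0 (s * norm w))"
    using S unfolding sq by simp
  have eqf: "(\<Sum>b\<in>B'. (w \<bullet> b) * z b) = w \<bullet> (\<Sum>b\<in>Basis. z b *\<^sub>R b)" for z
  proof -
    have "(\<Sum>b\<in>B'. (w \<bullet> b) * z b) = (\<Sum>b\<in>Basis. (w \<bullet> b) * z b)"
      by (intro sum.mono_neutral_left) (auto simp: B'_def)
    also have "\<dots> = w \<bullet> (\<Sum>b\<in>Basis. z b *\<^sub>R b)"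
      by (simp add: inner_sum_right mult.commute)
    finally show ?thesis .
  qed
  have Em: "(\<lambda>f. \<Sum>b\<in>Basis. f b *\<^sub>R b) \<in> P \<rightarrow>\<^sub>M (borel :: 'b measure)"
    unfolding P_def by measurable
  show ?thesis
    unfolding distributed_def
  proof (intro conjI)
    have "distr (gauss_vec s) lborel (\<lambda>u. w \<bullet> u) = distr P lborel (\<lambda>z. w \<bullet> (\<Sum>b\<in>Basis. z b *\<^sub>R b))"
      unfolding gv by (subst distr_distr) (auto simp: Em comp_def)
    also have "\<dots> = distr P lborel (\<lambda>z. \<Sum>b\<in>B'. (w \<bullet> b) * z b)"
      by (intro distr_cong) (auto simp: eqf)
    also have "\<dots> = density lborel (normal_density 0 (s * norm w))"
      using S' by (simp add: distributed_def)
    finally show "distr (gauss_vec s) lborel (\<lambda>u. w \<bullet> u) = density lborel (normal_density 0 (s * norm w))" .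
    show "(\<lambda>u. w \<bullet> u) \<in> gauss_vec s \<rightarrow>\<^sub>M lborel"
      by (subst measurable_cong_sets[where M'=borel and N'=borel]) auto
  qed simp
qed




lemma space_gauss_vec[simp]: "space (gauss_vec s) = UNIV"
  using sets_eq_imp_space_eq[OF sets_gauss_vec[of s]] by simp

lemma distr_pair_snd':
  assumes "prob_space M1" "prob_space M2"
  shows "distr (M1 \<Otimes>\<^sub>M M2) M2 snd = M2"
proof (intro measure_eqI)
  interpret M1: prob_space M1 by fact
  interpret M2: prob_space M2 by fact
  interpret pair_sigma_finite M1 M2 ..
  fix A assume A: "A \<in> sets (distr (M1 \<Otimes>\<^sub>M M2) M2 snd)"
  then have A': "A \<in> sets M2" by simp
  from A' have "emeasure (distr (M1 \<Otimes>\<^sub>M M2) M2 snd) A = emeasure (M1 \<Otimes>\<^sub>M M2) (space M1 \<times> A)"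
    by (auto simp add: emeasure_distr space_pair_measure dest: sets.sets_into_space intro!: arg_cong2[where f=emeasure])
  with A' show "emeasure (distr (M1 \<Otimes>\<^sub>M M2) M2 snd) A = emeasure M2 A"
  proof -
    have "emeasure (M1 \<Otimes>\<^sub>M M2) (space M1 \<times> A) = emeasure M1 (space M1) * emeasure M2 A"
      by (rule M2.emeasure_pair_measure_Times) (use A' in auto)
    then show ?thesis using A' \<open>emeasure (distr (M1 \<Otimes>\<^sub>M M2) M2 snd) A = _\<close> by (simp add: M1.emeasure_space_1)
  qed
qed simp

lemma distributed_fst:
  assumes "prob_space M1" "prob_space M2" "distributed M1 lborel f g"
  shows "distributed (M1 \<Otimes>\<^sub>M M2) lborel (\<lambda>x. f (fst x)) g"
proof -
  interpret M2: prob_space M2 by fact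
  have fm: "f \<in> M1 \<rightarrow>\<^sub>M lborel" using assms(3) by (simp add: distributed_def)
  have "distr (M1 \<Otimes>\<^sub>M M2) lborel (\<lambda>x. f (fst x)) = distr (distr (M1 \<Otimes>\<^sub>M M2) M1 fst) lborel f"
    using fm by (subst distr_distr) (auto simp: comp_def)
  also have "\<dots> = distr M1 lborel f" by (simp add: M2.distr_pair_fst)
  finally show ?thesis using assms(3) fm measurable_compose[OF measurable_fst fm] by (simp add: distributed_def)
qed

lemma distributed_snd:
  assumes "prob_space M1" "prob_space M2" "distributed M2 lborel f g"
  shows "distributed (M1 \<Otimes>\<^sub>M M2) lborel (\<lambda>x. f (snd x)) g"
proof -
  have fm: "f \<in> M2 \<rightarrow>\<^sub>M lborel" using assms(3) by (simp add: distributed_def)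
  have "distr (M1 \<Otimes>\<^sub>M M2) lborel (\<lambda>x. f (snd x)) = distr (distr (M1 \<Otimes>\<^sub>M M2) M2 snd) lborel f"
    using fm by (subst distr_distr) (auto simp: comp_def)
  also have "\<dots> = distr M2 lborel f" by (simp add: distr_pair_snd' assms)
  finally show ?thesis using assms(3) fm measurable_compose[OF measurable_snd fm] by (simp add: distributed_def)
qed

lemma Wf_distributed:
  fixes d1 :: "'b::euclidean_space" and d2 :: "'c::euclidean_space"
  assumes s1: "0 < s1" and s2: "0 < s2" and nz: "(d1, d2) \<noteq> 0"
  shows "distributed (gauss_vec s1 \<Otimes>\<^sub>M gauss_vec s2) lborel (Wf s1 s2 d1 d2)
           (normal_density 0 (sqrt (Vn s1 s2 d1 d2)))"
proof -
  let ?N = "gauss_vec s1 \<Otimes>\<^sub>M gauss_vec s2 :: ('b \<times> 'c) measure"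
  have p1: "prob_space (gauss_vec s1 :: 'b measure)" by (rule prob_space_gauss_vec) fact
  have p2: "prob_space (gauss_vec s2 :: 'c measure)" by (rule prob_space_gauss_vec) fact
  interpret G1: prob_space "gauss_vec s1 :: 'b measure" by fact
  interpret G2: prob_space "gauss_vec s2 :: 'c measure" by fact
  interpret N: pair_prob_space "gauss_vec s1 :: 'b measure" "gauss_vec s2 :: 'c measure" ..
  define w1 where "w1 = (1 / s1\<^sup>2) *\<^sub>R d1"
  define w2 where "w2 = (1 / s2\<^sup>2) *\<^sub>R d2"
  have Wf_eq: "Wf s1 s2 d1 d2 x = w1 \<bullet> fst x + w2 \<bullet> snd x" for x
    by (simp add: Wf_def w1_def w2_def)
  have n1: "s1 * norm w1 = norm d1 / s1" using s1 by (simp add: w1_def power2_eq_square)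
  have n2: "s2 * norm w2 = norm d2 / s2" using s2 by (simp add: w2_def power2_eq_square)
  have Vn_eq: "Vn s1 s2 d1 d2 = (norm d1 / s1)\<^sup>2 + (norm d2 / s2)\<^sup>2"
    by (simp add: Vn_def power_divide)
  show ?thesis
  proof (cases "d1 = 0")
    case True
    then have d2: "d2 \<noteq> 0" using nz by (simp add: zero_prod_def)
    then have w2: "w2 \<noteq> 0" using s2 by (simp add: w2_def)
    have "distributed ?N lborel (\<lambda>x. w2 \<bullet> snd x) (normal_density 0 (s2 * norm w2))"
      by (rule distributed_snd[OF p1 p2 gauss_vec_lin[OF s2 w2]])
    moreover have "sqrt (Vn s1 s2 d1 d2) = s2 * norm w2"
      using True s2 unfolding n2 Vn_def by (simp add: power_divide real_sqrt_divide)
    moreover have "Wf s1 s2 d1 d2 = (\<lambda>x. w2 \<bullet> snd x)" using True by (auto simp: Wf_def w2_def)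
    ultimately show ?thesis by simp
  next
    case d1: False
    then have w1: "w1 \<noteq> 0" using s1 by (simp add: w1_def)
    have X: "distributed ?N lborel (\<lambda>x. w1 \<bullet> fst x) (normal_density 0 (s1 * norm w1))"
      by (rule distributed_fst[OF p1 p2 gauss_vec_lin[OF s1 w1]])
    show ?thesis
    proof (cases "d2 = 0")
      case True
      have "sqrt (Vn s1 s2 d1 d2) = s1 * norm w1"
        using True s1 unfolding n1 Vn_def by (simp add: power_divide real_sqrt_divide)
      moreover have "Wf s1 s2 d1 d2 = (\<lambda>x. w1 \<bullet> fst x)" using True by (auto simp: Wf_def w1_def)
      ultimately show ?thesis using X by simp
    next
      case d2: False
      then have w2: "w2 \<noteq> 0" using s2 by (simp add: w2_def)
      have Y: "distributed ?N lborel (\<lambda>x. w2 \<bullet> snd x) (normal_density 0 (s2 * norm w2))"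
        by (rule distributed_snd[OF p1 p2 gauss_vec_lin[OF s2 w2]])
      have m1: "(\<lambda>u. w1 \<bullet> u) \<in> (gauss_vec s1 :: 'b measure) \<rightarrow>\<^sub>M borel"
        by (subst measurable_cong_sets[where M'=borel and N'=borel]) auto
      have m2: "(\<lambda>u. w2 \<bullet> u) \<in> (gauss_vec s2 :: 'c measure) \<rightarrow>\<^sub>M borel"
        by (subst measurable_cong_sets[where M'=borel and N'=borel]) auto
      have ind: "N.indep_var borel (\<lambda>x. w1 \<bullet> fst x) borel (\<lambda>x. w2 \<bullet> snd x)"
      proof (subst N.indep_var_distribution_eq, intro conjI)
        show "(\<lambda>x. w1 \<bullet> fst x) \<in> ?N \<rightarrow>\<^sub>M borel" using m1 by measurable
        show "(\<lambda>x. w2 \<bullet> snd x) \<in> ?N \<rightarrow>\<^sub>M borel" using m2 by measurable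
        have e1: "distr ?N borel (\<lambda>x. w1 \<bullet> fst x) = distr (gauss_vec s1) borel (\<lambda>u. w1 \<bullet> u)"
        proof -
          have "distr ?N borel (\<lambda>x. w1 \<bullet> fst x) = distr (distr ?N (gauss_vec s1) fst) borel (\<lambda>u. w1 \<bullet> u)"
            using m1 by (subst distr_distr) (auto simp: comp_def)
          then show ?thesis by (simp add: G2.distr_pair_fst)
        qed
        have e2: "distr ?N borel (\<lambda>x. w2 \<bullet> snd x) = distr (gauss_vec s2) borel (\<lambda>u. w2 \<bullet> u)"
        proof -
          have "distr ?N borel (\<lambda>x. w2 \<bullet> snd x) = distr (distr ?N (gauss_vec s2) snd) borel (\<lambda>u. w2 \<bullet> u)"
            using m2 by (subst distr_distr) (auto simp: comp_def)
          then show ?thesis by (simp add: distr_pair_snd' p1 p2)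
        qed
        have sf: "sigma_finite_measure (distr (gauss_vec s2 :: 'c measure) borel (\<lambda>u. w2 \<bullet> u))"
          by (intro prob_space_imp_sigma_finite prob_space.prob_space_distr[OF p2] m2)
        show "distr ?N borel (\<lambda>x. w1 \<bullet> fst x) \<Otimes>\<^sub>M distr ?N borel (\<lambda>x. w2 \<bullet> snd x) =
              distr ?N (borel \<Otimes>\<^sub>M borel) (\<lambda>x. (w1 \<bullet> fst x, w2 \<bullet> snd x))"
          unfolding e1 e2 by (subst pair_measure_distr[OF m1 m2 sf]) (auto intro!: distr_cong)
      qed
      have "distributed ?N lborel (\<lambda>x. w1 \<bullet> fst x + w2 \<bullet> snd x)
              (normal_density (0 + 0) (sqrt ((s1 * norm w1)\<^sup>2 + (s2 * norm w2)\<^sup>2)))"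
        by (rule N.add_indep_normal[OF ind _ _ X Y]) (use s1 s2 w1 w2 in auto)
      moreover have "sqrt ((s1 * norm w1)\<^sup>2 + (s2 * norm w2)\<^sup>2) = sqrt (Vn s1 s2 d1 d2)"
        by (simp add: Vn_eq n1 n2)
      moreover have "Wf s1 s2 d1 d2 = (\<lambda>x. w1 \<bullet> fst x + w2 \<bullet> snd x)" by (auto simp: Wf_eq)
      ultimately show ?thesis by simp
    qed
  qed
qed

lemma Vn_pos: "0 < s1 \<Longrightarrow> 0 < s2 \<Longrightarrow> (d1, d2) \<noteq> 0 \<Longrightarrow> 0 < Vn s1 s2 d1 d2"
  by (auto simp: Vn_def zero_prod_def add_pos_nonneg add_nonneg_pos)

lemma Wf_tail:
  fixes d1 :: "'b::euclidean_space" and d2 :: "'c::euclidean_space"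
  assumes s1: "0 < s1" and s2: "0 < s2" and nz: "(d1, d2) \<noteq> 0"
  shows "measure (gauss_vec s1 \<Otimes>\<^sub>M gauss_vec s2) {x. Wf s1 s2 d1 d2 x > a}
           = 1 - Phi (a / sqrt (Vn s1 s2 d1 d2))"
proof -
  have ps: "prob_space (gauss_vec s1 \<Otimes>\<^sub>M gauss_vec s2 :: ('b \<times> 'c) measure)"
    by (intro prob_space_pair prob_space_gauss_vec s1 s2)
  have "0 < sqrt (Vn s1 s2 d1 d2)" using Vn_pos[OF s1 s2 nz] by simp
  from normal_tail[OF ps Wf_distributed[OF s1 s2 nz] this]
  show ?thesis by (simp add: space_pair_measure)
qed




lemma np_core:
  fixes d1 :: "'b::euclidean_space" and d2 :: "'c::euclidean_space" and \<psi> :: "'b \<times> 'c \<Rightarrow> real"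
  assumes s1: "0 < s1" and s2: "0 < s2" and nz: "(d1, d2) \<noteq> 0"
    and \<psi>m[measurable]: "\<psi> \<in> borel_measurable borel" and \<psi>b: "\<And>x. 0 \<le> \<psi> x \<and> \<psi> x \<le> 1"
  shows "(\<integral>x. \<psi> ((d1, d2) + x) \<partial>(gauss_vec s1 \<Otimes>\<^sub>M gauss_vec s2))
    \<le> exp (t - Vn s1 s2 d1 d2 / 2) * (\<integral>x. \<psi> x \<partial>(gauss_vec s1 \<Otimes>\<^sub>M gauss_vec s2))
      + (1 - Phi ((t - Vn s1 s2 d1 d2) / sqrt (Vn s1 s2 d1 d2)))
      - exp (t - Vn s1 s2 d1 d2 / 2) * (1 - Phi (t / sqrt (Vn s1 s2 d1 d2)))"
proof -
  define N where "N = (gauss_vec s1 \<Otimes>\<^sub>M gauss_vec s2 :: ('b \<times> 'c) measure)"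
  define V where "V = Vn s1 s2 d1 d2"
  define W where "W = Wf s1 s2 d1 d2"
  define k where "k = exp (t - V / 2)"
  define L where "L x = exp (W x - V / 2)" for x
  define R where "R = {x. W x > t}"
  have sN[simp, measurable_cong]: "sets N = sets borel"
    unfolding N_def borel_prod[symmetric] by (rule sets_pair_measure_cong) auto
  have spN[simp]: "space N = UNIV" using sets_eq_imp_space_eq[OF sN] by simp
  have psN: "prob_space N" unfolding N_def by (intro prob_space_pair prob_space_gauss_vec s1 s2)
  interpret N: prob_space N by fact
  have Wm[measurable]: "W \<in> borel_measurable borel" unfolding W_def by measurable
  have Lm[measurable]: "L \<in> borel_measurable borel" unfolding L_def[abs_def] by measurable
  have Rm[measurable]: "R \<in> sets borel" unfolding R_def by measurable
  have shift_m0: "(\<lambda>x. (d1, d2) + x) \<in> borel \<rightarrow>\<^sub>M (borel :: ('b \<times> 'c) measure)"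
    by (intro borel_measurable_continuous_onI continuous_intros)
  have shift_m: "(\<lambda>x. (d1, d2) + x) \<in> N \<rightarrow>\<^sub>M borel"
    using shift_m0 by (simp only: measurable_cong_sets[OF sN refl])
  define Q where "Q = distr N borel (\<lambda>x. (d1, d2) + x)"
  have Q_eq: "Q = density N (\<lambda>x. ennreal (L x))"
    unfolding Q_def N_def L_def W_def V_def by (rule gauss_shift[OF s1 s2])
  have psQ: "prob_space Q" unfolding Q_def by (intro N.prob_space_distr shift_m)
  interpret Q: prob_space Q by fact
  have sQ[simp, measurable_cong]: "sets Q = sets borel" by (simp add: Q_def)
  have Lnn: "0 \<le> L x" for x by (simp add: L_def)
  have int1: "(\<integral>x. \<psi> ((d1, d2) + x) \<partial>N) = (\<integral>x. \<psi> x \<partial>Q)"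
    unfolding Q_def by (rule integral_distr[symmetric]) (auto simp: shift_m)
  have int2: "(\<integral>x. \<psi> x \<partial>Q) = (\<integral>x. L x * \<psi> x \<partial>N)"
    unfolding Q_eq by (subst integral_density) (auto simp: Lnn)
  have intQR: "Q.prob R = (\<integral>x. L x * indicator R x \<partial>N)"
  proof -
    have "Q.prob R = (\<integral>x. indicator R x \<partial>Q)" using Rm by simp
    also have "\<dots> = (\<integral>x. L x * indicator R x \<partial>N)"
      unfolding Q_eq by (subst integral_density) (auto simp: Lnn)
    finally show ?thesis .
  qed
  have QR: "Q.prob R = 1 - Phi ((t - V) / sqrt V)"
  proof -
    have "Q.prob R = N.prob ((\<lambda>x. (d1, d2) + x) -` R \<inter> space N)"
      unfolding Q_def using shift_m Rm by (simp add: measure_distr)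
    also have "(\<lambda>x. (d1, d2) + x) -` R \<inter> space N = {x. W x > t - V}"
      by (auto simp: R_def W_def V_def Wf_shift)
    also have "N.prob {x. W x > t - V} = 1 - Phi ((t - V) / sqrt V)"
      unfolding N_def W_def V_def by (rule Wf_tail[OF s1 s2 nz])
    finally show ?thesis .
  qed
  have NR: "N.prob R = 1 - Phi (t / sqrt V)"
    unfolding R_def N_def W_def V_def by (rule Wf_tail[OF s1 s2 nz])
  have iQpsi: "integrable Q \<psi>"
    by (rule Q.integrable_const_bound[where B=1]) (use \<psi>b in auto)
  have iQR: "integrable Q (indicator R :: _ \<Rightarrow> real)"
    by (rule Q.integrable_const_bound[where B=1]) auto
  have i1: "integrable N (\<lambda>x. L x * \<psi> x)"
    using iQpsi unfolding Q_eq by (subst (asm) integrable_density) (auto simp: Lnn)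
  have i2: "integrable N (\<lambda>x. L x * indicator R x)"
    using iQR unfolding Q_eq by (subst (asm) integrable_density) (auto simp: Lnn)
  have i3: "integrable N \<psi>"
    by (rule N.integrable_const_bound[where B=1]) (use \<psi>b in auto)
  have i4: "integrable N (indicator R :: _ \<Rightarrow> real)"
    by (rule N.integrable_const_bound[where B=1]) auto
  have pw: "L x * \<psi> x \<le> k * \<psi> x + (L x * indicator R x - k * indicator R x)" for x
  proof (cases "x \<in> R")
    case True
    then have "k \<le> L x" by (simp add: R_def k_def L_def)
    then have "(L x - k) * \<psi> x \<le> (L x - k) * 1" using \<psi>b[of x] by (intro mult_left_mono) auto
    then show ?thesis using True by (simp add: algebra_simps)
  next
    case False
    then have "L x \<le> k" by (simp add: R_def k_def L_def)
    then have "L x * \<psi> x \<le> k * \<psi> x" using \<psi>b[of x] by (intro mult_right_mono) auto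
    then show ?thesis using False by simp
  qed
  have "(\<integral>x. L x * \<psi> x \<partial>N) \<le> (\<integral>x. k * \<psi> x + (L x * indicator R x - k * indicator R x) \<partial>N)"
    by (rule integral_mono) (use i1 i2 i3 i4 pw in auto)
  also have "\<dots> = k * (\<integral>x. \<psi> x \<partial>N) + ((\<integral>x. L x * indicator R x \<partial>N) - k * (\<integral>x. indicator R x \<partial>N))"
    using i1 i2 i3 i4 by (simp add: integral_add integral_diff)
  also have "\<dots> = k * (\<integral>x. \<psi> x \<partial>N) + (Q.prob R - k * N.prob R)"
    using intQR Rm by simp
  finally show ?thesis
    unfolding int1[unfolded N_def] int2[unfolded N_def]
    by (simp add: N_def[symmetric] V_def[symmetric] k_def[symmetric] QR NR)
qed




lemma integral_bind_pmf_bdd: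
  fixes F :: "'b \<Rightarrow> real"
  assumes B: "\<And>x. \<bar>F x\<bar> \<le> B"
  shows "(\<integral>x. F x \<partial>measure_pmf (bind_pmf A K)) = (\<integral>a. (\<integral>x. F x \<partial>measure_pmf (K a)) \<partial>measure_pmf A)"
  unfolding measure_pmf_bind
  by (rule integral_bind[where K="count_space UNIV" and B=B and B'=1])
     (auto simp: B measure_pmf_in_subprob_space measure_pmf.emeasure_space_1 intro: prob_space.finite_measure[OF measure_pmf.prob_space_axioms])

lemma integral_return_pmf_real: "(\<integral>x. F x \<partial>measure_pmf (return_pmf a)) = (F a :: real)"
  by (simp add: integral_measure_pmf_real[of "{a}"])

lemma sum_insert_shift:
  fixes v :: "'a \<Rightarrow> 'v::ab_group_add"
  assumes j: "j \<le> length as"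
  defines "h \<equiv> \<lambda>i::nat. if i < length as then i else Suc i"
  shows "(\<Sum>i\<in>{i. i < length (as @ z # bs) \<and> (g(length as := y)) i}. v ((as @ z # bs) ! i))
       = (\<Sum>i\<in>{i. i < length (as @ bs) \<and> (g \<circ> h) i}. v ((as @ bs) ! i)) + (if y then v z else 0)"
proof -
  let ?j = "length as" and ?n = "length (as @ bs)"
  let ?J = "{i. i < length (as @ z # bs) \<and> (g(?j := y)) i}"
  let ?I = "{i. i < ?n \<and> (g \<circ> h) i}"
  have inj: "inj_on h ?I" by (auto simp: inj_on_def h_def split: if_splits)
  have J: "?J = h ` ?I \<union> (if y then {?j} else {})"
  proof (intro set_eqI iffI)
    fix i assume i: "i \<in> ?J"
    show "i \<in> h ` ?I \<union> (if y then {?j} else {})"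
    proof (cases "i = ?j")
      case True then show ?thesis using i by auto
    next
      case False
      define i' where "i' = (if i < ?j then i else i - 1)"
      have "h i' = i" using False by (auto simp: h_def i'_def)
      moreover have "i' \<in> ?I" using i False \<open>h i' = i\<close> by (auto simp: i'_def h_def split: if_splits)
      ultimately show ?thesis by blast
    qed
  next
    fix i assume "i \<in> h ` ?I \<union> (if y then {?j} else {})"
    then show "i \<in> ?J" by (auto simp: h_def split: if_splits)
  qed
  have hne: "h i \<noteq> ?j" for i unfolding h_def by auto
  have disj: "h ` ?I \<inter> (if y then {?j} else {}) = {}" 
  proof -
    have "?j \<notin> h ` ?I"
    proof
      assume "?j \<in> h ` ?I"
      then obtain i where "?j = h i" by blast
      with hne[of i] show False by simp
    qed
    then show ?thesis by (cases y) simp_all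
  qed
  have "(\<Sum>i\<in>?J. v ((as @ z # bs) ! i)) = (\<Sum>i\<in>h ` ?I. v ((as @ z # bs) ! i)) + (\<Sum>i\<in>(if y then {?j} else {}). v ((as @ z # bs) ! i))"
    unfolding J by (rule sum.union_disjoint) (use disj in simp_all)
  also have "(\<Sum>i\<in>h ` ?I. v ((as @ z # bs) ! i)) = (\<Sum>i\<in>?I. v ((as @ z # bs) ! h i))"
    using sum.reindex[OF inj, of "\<lambda>i. v ((as @ z # bs) ! i)"] by (simp add: comp_def)
  also have "\<dots> = (\<Sum>i\<in>?I. v ((as @ bs) ! i))"
    by (intro sum.cong refl) (auto simp: h_def nth_append)
  also have "(\<Sum>i\<in>(if y then {?j} else {}). v ((as @ z # bs) ! i)) = (if y then v z else 0)"
    by simp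
  finally show ?thesis .
qed

definition Eint :: "real \<Rightarrow> ('v \<Rightarrow> real) \<Rightarrow> ('a \<Rightarrow> 'v::ab_group_add) \<Rightarrow> 'a list \<Rightarrow> real" where
  "Eint p F v D = (\<integral>b. F (\<Sum>i\<in>{i. i < length D \<and> b i}. v (D ! i)) \<partial>measure_pmf (Pi_pmf {..<length D} False (\<lambda>_. bernoulli_pmf p)))"

lemma Eint_insert:
  fixes v :: "'a \<Rightarrow> 'v::ab_group_add" and F :: "'v \<Rightarrow> real"
  assumes p: "0 \<le> p" "p \<le> 1" and F: "\<And>x. 0 \<le> F x \<and> F x \<le> 1"
  shows "Eint p F v (as @ z # bs) = p * Eint p (\<lambda>w. F (w + v z)) v (as @ bs) + (1 - p) * Eint p F v (as @ bs)"
proof -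
  let ?j = "length as" and ?n = "length (as @ bs)"
  define h where "h = (\<lambda>i::nat. if i < length as then i else Suc i)"
  define B where "B = {..<Suc ?n} - {?j}"
  let ?P = "\<lambda>A. Pi_pmf A False (\<lambda>_::nat. bernoulli_pmf p)"
  have Fb: "\<bar>F x\<bar> \<le> 1" for x using F[of x] by auto
  have ins: "{..<length (as @ z # bs)} = insert ?j B" by (auto simp: B_def)
  have finB: "finite B" "?j \<notin> B" by (auto simp: B_def)
  have bij: "?P {..<?n} = map_pmf (\<lambda>g. g \<circ> h) (?P B)"
  proof (rule Pi_pmf_bij_betw)
    show "finite {..<?n}" by simp
    show "bij_betw h {..<?n} B"
    proof (rule bij_betw_imageI)
      show "inj_on h {..<?n}" by (auto simp: inj_on_def h_def split: if_splits)
      show "h ` {..<?n} = B"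
      proof (intro set_eqI iffI)
        fix i assume "i \<in> B"
        then have i: "i < Suc ?n" "i \<noteq> ?j" by (auto simp: B_def)
        define i' where "i' = (if i < ?j then i else i - 1)"
        have "h i' = i" "i' < ?n" using i by (auto simp: h_def i'_def)
        then show "i \<in> h ` {..<?n}" by force
      qed (auto simp: h_def B_def)
    qed
    show "x \<notin> {..<?n} \<Longrightarrow> h x \<notin> B" for x by (auto simp: h_def B_def)
  qed
  define G where "G = (\<lambda>y g. F (\<Sum>i\<in>{i. i < length (as @ z # bs) \<and> (g(?j := y)) i}. v ((as @ z # bs) ! i)))"
  have Gb: "\<bar>G y g\<bar> \<le> 1" for y g by (simp add: G_def Fb)
  have "Eint p F v (as @ z # bs) = (\<integral>b. F (\<Sum>i\<in>{i. i < length (as @ z # bs) \<and> b i}. v ((as @ z # bs) ! i)) \<partial>measure_pmf (?P (insert ?j B)))"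
    unfolding Eint_def ins ..
  also have "\<dots> = (\<integral>y. (\<integral>g. G y g \<partial>measure_pmf (?P B)) \<partial>measure_pmf (bernoulli_pmf p))"
    unfolding Pi_pmf_insert'[OF finB]
    apply (subst integral_bind_pmf_bdd[where B=1], rule Fb)
    apply (subst integral_bind_pmf_bdd[where B=1], rule Fb)
    apply (simp add: integral_return_pmf_real G_def)
    done
  also have "\<dots> = p * (\<integral>g. G True g \<partial>measure_pmf (?P B)) + (1 - p) * (\<integral>g. G False g \<partial>measure_pmf (?P B))"
    using p by (simp add: mult.commute)
  finally have chain: "Eint p F v (as @ z # bs) = p * (\<integral>g. G True g \<partial>measure_pmf (?P B)) + (1 - p) * (\<integral>g. G False g \<partial>measure_pmf (?P B))" .
  have Gh: "G y = (\<lambda>g. (\<lambda>b. F ((\<Sum>i\<in>{i. i < ?n \<and> b i}. v ((as @ bs) ! i)) + (if y then v z else 0))) (g \<circ> h))" for y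
    unfolding G_def h_def by (intro ext) (subst sum_insert_shift, auto)
  show ?thesis
    unfolding chain unfolding Eint_def bij by (simp add: Gh)
qed




lemma norm_clip: assumes "0 < C" shows "norm (clip C v) \<le> C"
proof (cases "norm v \<le> C")
  case True
  then have "max 1 (norm v / C) = 1" using assms by (auto simp: max_def divide_le_eq)
  then show ?thesis using True by (simp add: clip_def)
next
  case False
  then have m: "max 1 (norm v / C) = norm v / C" using assms by (auto simp: max_def le_divide_eq)
  have "norm v > 0" using False assms by linarith
  then show ?thesis using assms by (simp add: clip_def m)
qed

definition vz :: "('a \<Rightarrow> 'b::euclidean_space) \<Rightarrow> real \<Rightarrow> real \<Rightarrow> 'a \<times> 'c::euclidean_space \<Rightarrow> 'b \<times> 'c" where
  "vz f1 Cx Cy r = (clip Cx (f1 (fst r)), clip Cy (snd r))"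

lemma step_eq:
  "dpfmix_step f1 m Cx Cy \<sigma>x \<sigma>y D I =
    distr (gauss_vec (Cx * \<sigma>x / m) \<Otimes>\<^sub>M gauss_vec (Cy * \<sigma>y / m)) borel
      (\<lambda>x. (1 / real m) *\<^sub>R (\<Sum>i\<in>I. vz f1 Cx Cy (D ! i)) + x)"
  unfolding dpfmix_step_def
  by (intro distr_cong refl) (auto simp: vz_def fst_sum snd_sum prod_eq_iff)

lemma sets_N: "sets (gauss_vec s1 \<Otimes>\<^sub>M gauss_vec s2 :: ('b::euclidean_space \<times> 'c::euclidean_space) measure) = sets borel"
  unfolding borel_prod[symmetric] by (rule sets_pair_measure_cong) auto

lemma shift_meas: "(\<lambda>x. c + x) \<in> (gauss_vec s1 \<Otimes>\<^sub>M gauss_vec s2 :: ('b::euclidean_space \<times> 'c::euclidean_space) measure) \<rightarrow>\<^sub>M borel"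
proof -
  have "(\<lambda>x. c + x) \<in> borel \<rightarrow>\<^sub>M (borel :: ('b \<times> 'c) measure)"
    by (intro borel_measurable_continuous_onI continuous_intros)
  then show ?thesis by (simp only: measurable_cong_sets[OF sets_N refl])
qed

lemma subsampled_integral:
  fixes f1 :: "'a \<Rightarrow> 'b::euclidean_space" and D :: "('a \<times> 'c::euclidean_space) list"
  assumes s: "0 < Cx * \<sigma>x / m" "0 < Cy * \<sigma>y / m"
    and \<phi>m[measurable]: "\<phi> \<in> borel_measurable borel" and \<phi>b: "\<And>x. 0 \<le> \<phi> x \<and> \<phi> x \<le> 1"
  shows "(\<integral>x. \<phi> x \<partial>dpfmix_subsampled f1 m n Cx Cy \<sigma>x \<sigma>y D) =
    Eint (real m / real n) (\<lambda>w. \<integral>x. \<phi> ((1 / real m) *\<^sub>R w + x) \<partial>(gauss_vec (Cx * \<sigma>x / m) \<Otimes>\<^sub>M gauss_vec (Cy * \<sigma>y / m))) (vz f1 Cx Cy) D"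
proof -
  let ?N = "gauss_vec (Cx * \<sigma>x / m) \<Otimes>\<^sub>M gauss_vec (Cy * \<sigma>y / m) :: ('b \<times> 'c) measure"
  have psN: "prob_space ?N" by (intro prob_space_pair prob_space_gauss_vec s)
  have step_sp: "dpfmix_step f1 m Cx Cy \<sigma>x \<sigma>y D I \<in> space (subprob_algebra borel)" for I
    unfolding step_eq space_subprob_algebra
    by (auto intro!: prob_space_imp_subprob_space prob_space.prob_space_distr[OF psN] shift_meas)
  have "(\<integral>x. \<phi> x \<partial>dpfmix_subsampled f1 m n Cx Cy \<sigma>x \<sigma>y D)
     = (\<integral>I. (\<integral>x. \<phi> x \<partial>dpfmix_step f1 m Cx Cy \<sigma>x \<sigma>y D I) \<partial>measure_pmf (poisson_sample (real m / real n) (length D)))"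
    unfolding dpfmix_subsampled_def
    by (rule integral_bind[where K=borel and B=1 and B'=1])
       (use \<phi>b step_sp in \<open>auto intro: prob_space.finite_measure[OF measure_pmf.prob_space_axioms]
          simp: space_subprob_algebra subprob_space.subprob_emeasure_le_1\<close>)
  also have "\<dots> = Eint (real m / real n) (\<lambda>w. \<integral>x. \<phi> ((1 / real m) *\<^sub>R w + x) \<partial>?N) (vz f1 Cx Cy) D"
    unfolding poisson_sample_def Eint_def integral_map_pmf step_eq
    by (simp add: integral_distr[OF shift_meas \<phi>m])
  finally show ?thesis .
qed




lemma Eint_le:
  fixes f g :: "'v::ab_group_add \<Rightarrow> real"
  assumes f: "\<And>w. \<bar>f w\<bar> \<le> 1" and g: "\<And>w. \<bar>g w\<bar> \<le> 1" and le: "\<And>w. f w \<le> k * g w + C"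
  shows "Eint p f v D \<le> k * Eint p g v D + C"
proof -
  let ?M = "measure_pmf (Pi_pmf {..<length D} False (\<lambda>_. bernoulli_pmf p))"
  let ?s = "\<lambda>b. \<Sum>i\<in>{i. i < length D \<and> b i}. v (D ! i)"
  have i1: "integrable ?M (\<lambda>b. f (?s b))"
    by (rule measure_pmf.integrable_const_bound[where B=1]) (auto simp: f)
  have i2: "integrable ?M (\<lambda>b. g (?s b))"
    by (rule measure_pmf.integrable_const_bound[where B=1]) (auto simp: g)
  have "Eint p f v D = (\<integral>b. f (?s b) \<partial>?M)" unfolding Eint_def ..
  also have "\<dots> \<le> (\<integral>b. k * g (?s b) + C \<partial>?M)"
    by (rule integral_mono) (use i1 i2 le in auto)
  also have "\<dots> = k * (\<integral>b. g (?s b) \<partial>?M) + C"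
    using i2 by (simp add: integral_add measure_pmf.prob_space)
  finally show ?thesis unfolding Eint_def .
qed

lemma Eint_bounds:
  fixes f :: "'v::ab_group_add \<Rightarrow> real"
  assumes f: "\<And>w. 0 \<le> f w \<and> f w \<le> 1"
  shows "0 \<le> Eint p f v D" "Eint p f v D \<le> 1"
proof -
  let ?M = "measure_pmf (Pi_pmf {..<length D} False (\<lambda>_. bernoulli_pmf p))"
  let ?s = "\<lambda>b. \<Sum>i\<in>{i. i < length D \<and> b i}. v (D ! i)"
  have i1: "integrable ?M (\<lambda>b. f (?s b))"
    by (rule measure_pmf.integrable_const_bound[where B=1]) (use f in auto)
  show "0 \<le> Eint p f v D" unfolding Eint_def by (rule integral_nonneg_AE) (use f in auto)
  have "(\<integral>b. f (?s b) \<partial>?M) \<le> (\<integral>b. 1 \<partial>?M)"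
    by (rule integral_mono) (use i1 f in auto)
  then show "Eint p f v D \<le> 1" unfolding Eint_def by (simp add: measure_pmf.prob_space)
qed

lemma sets_subsampled: "sets (dpfmix_subsampled f1 m n Cx Cy \<sigma>x \<sigma>y D) = sets borel"
  unfolding dpfmix_subsampled_def
  by (subst sets_bind[where N=borel]) (auto simp: step_eq)

lemma Phi_tail_small:
  assumes e: "0 < e" and V: "0 < V"
  shows "\<exists>t. 1 - Phi ((t - V) / sqrt V) < e"
proof -
  from order_tendstoD(1)[OF Phi_top, of "1 - e"] e
  have "eventually (\<lambda>x. Phi x > 1 - e) at_top" by simp
  then obtain X where X: "\<And>x. x \<ge> X \<Longrightarrow> Phi x > 1 - e" by (auto simp: eventually_at_top_linorder)
  define t where "t = V + sqrt V * X"
  have "(t - V) / sqrt V = X" using V by (simp add: t_def)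
  then have "1 - Phi ((t - V) / sqrt V) < e" using X[of X] by simp
  then show ?thesis by blast
qed

theorem mainTheorem2:
  fixes f1 :: "'a \<Rightarrow> 'b::euclidean_space"
    and as bs :: "('a \<times> 'c::euclidean_space) list" and z :: "'a \<times> 'c"
    and m n :: nat and Cx Cy \<sigma>x \<sigma>y :: real
  assumes "1 \<le> m" "m \<le> n"
    and "Cx > 0" "Cy > 0" "\<sigma>x > 0" "\<sigma>y > 0"
    and "S = as @ bs" "S' = as @ z # bs"
    and "0 \<le> \<alpha>" "\<alpha> \<le> 1"
  shows "tradeoff (dpfmix_subsampled f1 m n Cx Cy \<sigma>x \<sigma>y S) (dpfmix_subsampled f1 m n Cx Cy \<sigma>x \<sigma>y S') \<alpha>
         \<ge> (real m / real n) * G_tradeoff (sqrt (1 / \<sigma>x\<^sup>2 + 1 / \<sigma>y\<^sup>2)) \<alpha>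
           + (1 - real m / real n) * (1 - \<alpha>)"
proof -
  note A = assms
  define p where "p = real m / real n"
  define \<mu> where "\<mu> = sqrt (1 / \<sigma>x\<^sup>2 + 1 / \<sigma>y\<^sup>2)"
  define s1 where "s1 = Cx * \<sigma>x / m"
  define s2 where "s2 = Cy * \<sigma>y / m"
  have m0: "0 < real m" using A(1) by simp
  have s1: "0 < s1" using A m0 by (simp add: s1_def)
  have s2: "0 < s2" using A m0 by (simp add: s2_def)
  have p0: "0 \<le> p" and p1: "p \<le> 1" using A(1,2) by (auto simp: p_def)
  define N where "N = (gauss_vec s1 \<Otimes>\<^sub>M gauss_vec s2 :: ('b \<times> 'c) measure)"
  have psN: "prob_space N" unfolding N_def by (intro prob_space_pair prob_space_gauss_vec s1 s2)
  interpret N: prob_space N by fact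
  have sN: "sets N = sets borel" unfolding N_def by (rule sets_N)
  define v where "v = (vz f1 Cx Cy :: 'a \<times> 'c \<Rightarrow> 'b \<times> 'c)"
  define d where "d = (1 / real m) *\<^sub>R v z"
  define V where "V = Vn s1 s2 (fst d) (snd d)"
  have \<mu>0: "0 \<le> \<mu>" by (simp add: \<mu>_def)
  have V\<mu>: "V \<le> \<mu>\<^sup>2"
  proof -
    have c1: "norm (fst d) / s1 \<le> 1 / \<sigma>x"
    proof -
      have "norm (fst d) = norm (clip Cx (f1 (fst z))) / m" using m0 by (simp add: d_def v_def vz_def)
      also have "\<dots> \<le> Cx / m" using m0 by (intro divide_right_mono norm_clip A(3)) simp
      finally have "norm (fst d) \<le> Cx / m" .
      then have "norm (fst d) / s1 \<le> (Cx / m) / s1" using s1 by (intro divide_right_mono) auto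
      also have "\<dots> = 1 / \<sigma>x" using A m0 by (simp add: s1_def)
      finally show ?thesis .
    qed
    have c2: "norm (snd d) / s2 \<le> 1 / \<sigma>y"
    proof -
      have "norm (snd d) = norm (clip Cy (snd z)) / m" using m0 by (simp add: d_def v_def vz_def)
      also have "\<dots> \<le> Cy / m" using m0 by (intro divide_right_mono norm_clip A(4)) simp
      finally have "norm (snd d) \<le> Cy / m" .
      then have "norm (snd d) / s2 \<le> (Cy / m) / s2" using s2 by (intro divide_right_mono) auto
      also have "\<dots> = 1 / \<sigma>y" using A m0 by (simp add: s2_def)
      finally show ?thesis .
    qed
    have "V = (norm (fst d) / s1)\<^sup>2 + (norm (snd d) / s2)\<^sup>2" by (simp add: V_def Vn_def power_divide)
    also have "\<dots> \<le> (1 / \<sigma>x)\<^sup>2 + (1 / \<sigma>y)\<^sup>2"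
      using c1 c2 s1 s2 by (intro add_mono power_mono) auto
    also have "\<dots> = \<mu>\<^sup>2" by (simp add: \<mu>_def power_divide)
    finally show ?thesis .
  qed
  have sqV\<mu>: "sqrt V \<le> \<mu>" using V\<mu> \<mu>0 real_sqrt_le_mono[OF V\<mu>] by simp
  show ?thesis
    unfolding tradeoff_def p_def[symmetric] \<mu>_def[symmetric]
  proof (rule cInf_greatest)
    show "{1 - (\<integral>x. \<phi> x \<partial>dpfmix_subsampled f1 m n Cx Cy \<sigma>x \<sigma>y S') | \<phi>.
        \<phi> \<in> borel_measurable (dpfmix_subsampled f1 m n Cx Cy \<sigma>x \<sigma>y S) \<and> (\<forall>x. 0 \<le> \<phi> x \<and> \<phi> x \<le> 1) \<and>
        (\<integral>x. \<phi> x \<partial>dpfmix_subsampled f1 m n Cx Cy \<sigma>x \<sigma>y S) \<le> \<alpha>} \<noteq> {}"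
      using A(9) by (auto intro!: exI[of _ "\<lambda>_. 0"])
  next
    fix r assume "r \<in> {1 - (\<integral>x. \<phi> x \<partial>dpfmix_subsampled f1 m n Cx Cy \<sigma>x \<sigma>y S') | \<phi>.
        \<phi> \<in> borel_measurable (dpfmix_subsampled f1 m n Cx Cy \<sigma>x \<sigma>y S) \<and> (\<forall>x. 0 \<le> \<phi> x \<and> \<phi> x \<le> 1) \<and>
        (\<integral>x. \<phi> x \<partial>dpfmix_subsampled f1 m n Cx Cy \<sigma>x \<sigma>y S) \<le> \<alpha>}"
    then obtain \<phi> where r: "r = 1 - (\<integral>x. \<phi> x \<partial>dpfmix_subsampled f1 m n Cx Cy \<sigma>x \<sigma>y S')"
      and \<phi>m0: "\<phi> \<in> borel_measurable (dpfmix_subsampled f1 m n Cx Cy \<sigma>x \<sigma>y S)"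
      and \<phi>b: "\<And>x. 0 \<le> \<phi> x \<and> \<phi> x \<le> 1"
      and \<phi>\<alpha>: "(\<integral>x. \<phi> x \<partial>dpfmix_subsampled f1 m n Cx Cy \<sigma>x \<sigma>y S) \<le> \<alpha>"
      by blast
    have \<phi>m[measurable]: "\<phi> \<in> borel_measurable borel"
      using \<phi>m0 by (simp only: measurable_cong_sets[OF sets_subsampled refl])
    define F where "F w = (\<integral>x. \<phi> ((1 / real m) *\<^sub>R w + x) \<partial>N)" for w
    have Fb: "0 \<le> F w \<and> F w \<le> 1" for w
    proof -
      have int: "integrable N (\<lambda>x. \<phi> ((1 / real m) *\<^sub>R w + x))"
        by (rule N.integrable_const_bound[where B=1]) (use \<phi>b in \<open>auto simp: measurable_cong_sets[OF sN refl]\<close>)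
      have "0 \<le> F w" unfolding F_def by (rule integral_nonneg_AE) (use \<phi>b in auto)
      moreover have "F w \<le> (\<integral>x. 1 \<partial>N)" unfolding F_def by (rule integral_mono) (use int \<phi>b in auto)
      ultimately show ?thesis by (simp add: N.prob_space)
    qed
    have Fb': "\<bar>F w\<bar> \<le> 1" for w using Fb[of w] by auto
    define a where "a = Eint p F v S"
    define e where "e = Eint p (\<lambda>w. F (w + v z)) v S"
    have PS: "(\<integral>x. \<phi> x \<partial>dpfmix_subsampled f1 m n Cx Cy \<sigma>x \<sigma>y S) = a"
      unfolding a_def F_def[abs_def] N_def s1_def s2_def v_def p_def
      by (rule subsampled_integral) (use s1 s2 \<phi>b in \<open>auto simp: s1_def s2_def\<close>)
    have PS': "(\<integral>x. \<phi> x \<partial>dpfmix_subsampled f1 m n Cx Cy \<sigma>x \<sigma>y S') = p * e + (1 - p) * a"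
    proof -
      have "(\<integral>x. \<phi> x \<partial>dpfmix_subsampled f1 m n Cx Cy \<sigma>x \<sigma>y S') = Eint p F v S'"
        unfolding F_def[abs_def] N_def s1_def s2_def v_def p_def
        by (rule subsampled_integral) (use s1 s2 \<phi>b in \<open>auto simp: s1_def s2_def\<close>)
      also have "\<dots> = p * e + (1 - p) * a"
        unfolding A(7,8) a_def e_def by (rule Eint_insert[OF p0 p1 Fb])
      finally show ?thesis .
    qed
    have a0: "0 \<le> a" and a1: "a \<le> \<alpha>" using \<phi>\<alpha> PS Eint_bounds[OF Fb] by (auto simp: a_def)
    have e0: "0 \<le> e" and e1: "e \<le> 1" using Eint_bounds[of "\<lambda>w. F (w + v z)"] Fb by (auto simp: e_def)
    have Fshift: "F (w + v z) = (\<integral>x. (\<lambda>y. \<phi> ((1 / real m) *\<^sub>R w + y)) ((fst d, snd d) + x) \<partial>N)" for w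
      unfolding F_def prod.collapse d_def by (simp add: scaleR_add_right add.assoc)
    show "p * G_tradeoff \<mu> \<alpha> + (1 - p) * (1 - \<alpha>) \<le> r"
    proof (cases "d = 0")
      case True
      have "F (w + v z) = F w" for w
        using Fshift[of w] True by (simp add: F_def zero_prod_def[symmetric])
      then have "e = a" unfolding e_def a_def by simp
      then have r': "r = 1 - a" using r PS' by (simp add: algebra_simps)
      show ?thesis
      proof (cases "\<alpha> = 0 \<or> \<alpha> = 1")
        case True
        then show ?thesis using a0 a1 r' p0 p1 by (auto simp: G_tradeoff_def)
      next
        case False
        then have \<alpha>01: "0 < \<alpha>" "\<alpha> < 1" using A(9,10) by auto
        have "G_tradeoff \<mu> \<alpha> = Phi (Phi_inv (1 - \<alpha>) - \<mu>)" using \<alpha>01 by (simp add: G_tradeoff_def)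
        also have "\<dots> \<le> Phi (Phi_inv (1 - \<alpha>))" using \<mu>0 by (intro Phi_mono) simp
        also have "\<dots> = 1 - \<alpha>" using \<alpha>01 by (intro Phi_inv) auto
        finally have "G_tradeoff \<mu> \<alpha> \<le> 1 - \<alpha>" .
        then have "p * G_tradeoff \<mu> \<alpha> \<le> p * (1 - \<alpha>)" using p0 by (rule mult_left_mono)
        then show ?thesis using r' a1 by (simp add: algebra_simps)
      qed
    next
      case dnz: False
      have dnz': "(fst d, snd d) \<noteq> 0" using dnz by simp
      have Vpos: "0 < V" unfolding V_def by (rule Vn_pos[OF s1 s2 dnz'])
      have NP: "F (w + v z) \<le> exp (t - V / 2) * F w + ((1 - Phi ((t - V) / sqrt V)) - exp (t - V / 2) * (1 - Phi (t / sqrt V)))" for w t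
      proof -
        have "(\<lambda>y. \<phi> ((1 / real m) *\<^sub>R w + y)) \<in> borel_measurable borel" by measurable
        from np_core[OF s1 s2 dnz' this, of t] \<phi>b
        show ?thesis unfolding Fshift by (simp add: F_def N_def V_def)
      qed
      have eNP: "e \<le> exp (t - V / 2) * a + ((1 - Phi ((t - V) / sqrt V)) - exp (t - V / 2) * (1 - Phi (t / sqrt V)))" for t
        unfolding e_def a_def by (rule Eint_le) (use Fb' NP in auto)
      show ?thesis
      proof (cases "\<alpha> = 1")
        case True
        have "p * e + (1 - p) * a \<le> p * 1 + (1 - p) * 1"
          using e1 a1 True p0 p1 by (intro add_mono mult_left_mono) auto
        then show ?thesis using True r PS' by (simp add: G_tradeoff_def)
      next
        case \<alpha>n1: False
        show ?thesis
        proof (cases "\<alpha> = 0")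
          case True
          then have a00: "a = 0" using a0 a1 by simp
          have "e \<le> 0"
          proof (rule ccontr)
            assume "\<not> e \<le> 0"
            then have "0 < e" by simp
            from Phi_tail_small[OF this Vpos] obtain t where t: "1 - Phi ((t - V) / sqrt V) < e" by blast
            have "0 \<le> exp (t - V / 2) * (1 - Phi (t / sqrt V))" using Phi_bounds[of "t / sqrt V"] by simp
            with eNP[of t] a00 t show False by simp
          qed
          then have "e = 0" using e0 by simp
          then show ?thesis using True r PS' a00 by (simp add: G_tradeoff_def algebra_simps)
        next
          case \<alpha>n0: False
          then have \<alpha>01: "0 < \<alpha>" "\<alpha> < 1" using A(9,10) \<alpha>n1 by auto
          define q where "q = Phi_inv (1 - \<alpha>)"
          have q: "Phi q = 1 - \<alpha>" unfolding q_def using \<alpha>01 by (intro Phi_inv) auto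
          define t where "t = sqrt V * q"
          have tq: "t / sqrt V = q" using Vpos by (simp add: t_def)
          have VV: "V / sqrt V = sqrt V" using Vpos by (simp add: real_div_sqrt)
          have tq2: "(t - V) / sqrt V = q - sqrt V"
            by (simp only: diff_divide_distrib tq VV)
          have "e \<le> exp (t - V / 2) * a + ((1 - Phi (q - sqrt V)) - exp (t - V / 2) * \<alpha>)"
            using eNP[of t] unfolding tq tq2 q by simp
          also have "\<dots> \<le> 1 - Phi (q - sqrt V)"
          proof -
            have "exp (t - V / 2) * a \<le> exp (t - V / 2) * \<alpha>" by (intro mult_left_mono a1) simp
            then show ?thesis by linarith
          qed
          finally have e': "e \<le> 1 - Phi (q - sqrt V)" .
          have G: "G_tradeoff \<mu> \<alpha> = Phi (q - \<mu>)" using \<alpha>01 by (simp add: G_tradeoff_def q_def)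
          have "Phi (q - \<mu>) \<le> Phi (q - sqrt V)" using sqV\<mu> by (intro Phi_mono) simp
          then have "p * Phi (q - \<mu>) \<le> p * (1 - e)" using e' p0
            by (intro mult_left_mono) auto
          moreover have "(1 - p) * (1 - \<alpha>) \<le> (1 - p) * (1 - a)" using a1 p1 by (intro mult_left_mono) auto
          ultimately show ?thesis using r PS' G by (simp add: algebra_simps)
        qed
      qed
    qed
  qed
qed


end
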